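(* Let $\mathcal{H}$ be a finite-dimensional Hilbert space, $\mathcal{O}\in\mathcal{L}(\mathcal{H})$ Hermitian, and $n\geq 1$. For $1\leq k\leq n$ define \[\mathcal{O}_k=\frac{1}{n!}\sum_{\pi\in\mathfrak{S}_n}U_\pi\,U_{s_k}\,(\mathcal{O}\otimes I^{\otimes n-1})\,U_\pi^\dagger\in\mathcal{L}(\mathcal{H}^{\otimes n}).\] Then for any $1\leq i\leq j\leq n$, $\mathcal{O}_i\mathcal{O}_j=\mathcal{O}_j\mathcal{O}_i$.
   Context: $\mathfrak{S}_n$ is the symmetric group on $\{1,\ldots,n\}$. For $\pi\in\mathfrak{S}_n$, $U_\pi$ is the unitary on $\mathcal{H}^{\otimes n}$ with $U_\pi\ket{\psi_1}\cdots\ket{\psi_n}=\ket{\psi_{\pi^{-1}(1)}}\cdots\ket{\psi_{\pi^{-1}(n)}}$. $s_k\in\mathfrak{S}_n$ is the cyclic shift on the first $k$ elements: $s_k(i)=i+1$ for $i<k$, $s_k(k)=1$, and $s_k(i)=i$ for $k<i\leq n$. *)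

theory Defs
  imports Complex_Main "HOL-Combinatorics.Permutations"
begin

text \<open>Model: H = C^d with its standard orthonormal basis e_0..e_(d-1).
  A basis vector of H^(tensor n) is a tuple x, represented as a function nat => nat with
  x i < d for i < n and x i = 0 for i >= n. An operator on H^(tensor n) is given by its
  matrix entries A y x = <e_y, A e_x>. Positions are 0-based (position i here is
  position i+1 of the paper).\<close>

type_synonym tensor_op = "(nat \<Rightarrow> nat) \<Rightarrow> (nat \<Rightarrow> nat) \<Rightarrow> complex"

definition tuples :: "nat \<Rightarrow> nat \<Rightarrow> (nat \<Rightarrow> nat) set" where
  "tuples n d = {x. (\<forall>i<n. x i < d) \<and> (\<forall>i. n \<le> i \<longrightarrow> x i = 0)}"

definition op_mult :: "nat \<Rightarrow> nat \<Rightarrow> tensor_op \<Rightarrow> tensor_op \<Rightarrow> tensor_op" where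
  "op_mult n d A B = (\<lambda>y x. \<Sum>z\<in>tuples n d. A y z * B z x)"

definition op_adj :: "tensor_op \<Rightarrow> tensor_op" where
  "op_adj A = (\<lambda>y x. cnj (A x y))"

definition perm_op :: "(nat \<Rightarrow> nat) \<Rightarrow> tensor_op" where
  "perm_op \<pi> = (\<lambda>y x. if y = x \<circ> inv \<pi> then 1 else 0)"

definition cyc_shift :: "nat \<Rightarrow> nat \<Rightarrow> nat" where
  "cyc_shift k i = (if i + 1 < k then i + 1 else if i + 1 = k then 0 else i)"

definition first_op :: "nat \<Rightarrow> (nat \<Rightarrow> nat \<Rightarrow> complex) \<Rightarrow> tensor_op" where
  "first_op n Obs = (\<lambda>y x. Obs (y 0) (x 0) * (if \<forall>i\<in>{1..<n}. y i = x i then 1 else 0))"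

definition hermitian_mat :: "nat \<Rightarrow> (nat \<Rightarrow> nat \<Rightarrow> complex) \<Rightarrow> bool" where
  "hermitian_mat d Obs = (\<forall>a<d. \<forall>b<d. Obs a b = cnj (Obs b a))"

definition sym_op :: "nat \<Rightarrow> nat \<Rightarrow> (nat \<Rightarrow> nat \<Rightarrow> complex) \<Rightarrow> nat \<Rightarrow> tensor_op" where
  "sym_op n d Obs k = (\<lambda>y x. (1 / of_nat (fact n)) *
     (\<Sum>\<pi>\<in>{\<pi>. \<pi> permutes {..<n}}.
        op_mult n d (op_mult n d (op_mult n d (perm_op \<pi>) (perm_op (cyc_shift k)))
                                  (first_op n Obs)) (op_adj (perm_op \<pi>)) y x))"

end

theory Submission
  imports Defs "HOL-Library.FuncSet" "HOL-Combinatorics.Cycles"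
begin


definition Idm :: "nat \<Rightarrow> nat \<Rightarrow> complex" where
  "Idm a b = (if a = b then 1 else 0)"

definition mm :: "nat \<Rightarrow> (nat \<Rightarrow> nat \<Rightarrow> complex) \<Rightarrow> (nat \<Rightarrow> nat \<Rightarrow> complex) \<Rightarrow> nat \<Rightarrow> nat \<Rightarrow> complex" where
  "mm d A B = (\<lambda>a b. \<Sum>t<d. A a t * B t b)"

definition gop :: "nat \<Rightarrow> (nat \<Rightarrow> nat) \<Rightarrow> (nat \<Rightarrow> nat \<Rightarrow> nat \<Rightarrow> complex) \<Rightarrow> tensor_op" where
  "gop n \<tau> f = (\<lambda>y x. \<Prod>m<n. f m (y (\<tau> m)) (x m))"

lemma tuplesD: "y \<in> tuples n d \<Longrightarrow> m < n \<Longrightarrow> y m < d"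
  and tuplesD2: "y \<in> tuples n d \<Longrightarrow> n \<le> m \<Longrightarrow> y m = 0"
  by (auto simp: tuples_def)

lemma sum_tuples_prod:
  "(\<Sum>z\<in>tuples n d. \<Prod>m<n. h m (z m)) = (\<Prod>m<n. \<Sum>t<d. (h m t :: complex))"
proof -
  have "(\<Prod>m<n. \<Sum>t<d. h m t) = (\<Sum>g\<in>PiE {..<n} (\<lambda>_. {..<d}). \<Prod>m<n. h m (g m))"
    using prod_sum_PiE[of "{..<n}" "\<lambda>_. {..<d}" h] by simp
  also have "\<dots> = (\<Sum>z\<in>tuples n d. \<Prod>m<n. h m (z m))"
    by (rule sum.reindex_bij_witness[where i="\<lambda>z. restrict z {..<n}" and j="\<lambda>g i. if i < n then g i else 0"])
       (auto simp: tuples_def PiE_def extensional_def fun_eq_iff)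
  finally show ?thesis ..
qed

lemma prod_indicator:
  assumes "finite A"
  shows "(\<Prod>m\<in>A. (if P m then 1 else 0 :: complex)) = (if \<forall>m\<in>A. P m then 1 else 0)"
  using assms by (induction A rule: finite_induct) auto

lemma gop_cong:
  assumes "\<And>m a b. m < n \<Longrightarrow> a < d \<Longrightarrow> b < d \<Longrightarrow> f m a b = g m a b"
    and "\<tau> permutes {..<n}" and "y \<in> tuples n d" and "x \<in> tuples n d"
  shows "gop n \<tau> f y x = gop n \<tau> g y x"
  unfolding gop_def
proof (rule prod.cong)
  fix m assume m: "m \<in> {..<n}"
  hence "\<tau> m < n" using assms(2) permutes_in_image by fastforce
  show "f m (y (\<tau> m)) (x m) = g m (y (\<tau> m)) (x m)"
  proof (rule assms(1))
    show "m < n" using m by simp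
    show "y (\<tau> m) < d" using tuplesD[OF assms(3) \<open>\<tau> m < n\<close>] .
    show "x m < d" using tuplesD[OF assms(4)] m by simp
  qed
qed simp

lemma perm_op_gop:
  assumes "\<pi> permutes {..<n}" and "y \<in> tuples n d" and "x \<in> tuples n d"
  shows "perm_op \<pi> y x = gop n \<pi> (\<lambda>_. Idm) y x"
proof -
  have "gop n \<pi> (\<lambda>_. Idm) y x = (if \<forall>m\<in>{..<n}. y (\<pi> m) = x m then 1 else 0)"
    unfolding gop_def Idm_def by (rule prod_indicator) simp
  moreover have "(y = x \<circ> inv \<pi>) \<longleftrightarrow> (\<forall>m\<in>{..<n}. y (\<pi> m) = x m)"
  proof
    assume "y = x \<circ> inv \<pi>" thus "\<forall>m\<in>{..<n}. y (\<pi> m) = x m"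
      using permutes_inverses(2)[OF assms(1)] by simp
  next
    assume h: "\<forall>m\<in>{..<n}. y (\<pi> m) = x m"
    show "y = x \<circ> inv \<pi>"
    proof
      fix m show "y m = (x \<circ> inv \<pi>) m"
      proof (cases "m < n")
        case True
        hence "inv \<pi> m < n" using permutes_in_image[OF permutes_inv[OF assms(1)]] by simp
        hence "y (\<pi> (inv \<pi> m)) = x (inv \<pi> m)" using h by simp
        thus ?thesis using permutes_inverses(1)[OF assms(1)] by simp
      next
        case False
        hence "inv \<pi> m = m" using permutes_not_in[OF permutes_inv[OF assms(1)]] by simp
        thus ?thesis using False assms(2,3) by (simp add: tuplesD2)
      qed
    qed
  qed
  ultimately show ?thesis unfolding perm_op_def by simp
qed

lemma adj_perm_op:
  assumes "\<pi> permutes {..<n}"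
  shows "op_adj (perm_op \<pi>) y x = perm_op (inv \<pi>) y x"
proof -
  have "(x = y \<circ> inv \<pi>) \<longleftrightarrow> (y = x \<circ> \<pi>)"
  proof
    assume "x = y \<circ> inv \<pi>"
    hence "x \<circ> \<pi> = y \<circ> (inv \<pi> \<circ> \<pi>)" by (simp add: o_assoc)
    thus "y = x \<circ> \<pi>" using permutes_inv_o(2)[OF assms] by simp
  next
    assume "y = x \<circ> \<pi>"
    hence "y \<circ> inv \<pi> = x \<circ> (\<pi> \<circ> inv \<pi>)" by (simp add: o_assoc)
    thus "x = y \<circ> inv \<pi>" using permutes_inv_o(1)[OF assms] by simp
  qed
  thus ?thesis unfolding op_adj_def perm_op_def permutes_inv_inv[OF assms] by simp
qed

lemma first_op_gop:
  assumes "n \<ge> 1"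
  shows "first_op n Obs y x = gop n id (\<lambda>m. if m = 0 then Obs else Idm) y x"
proof -
  have e: "{..<n} = insert 0 {1..<n}" using assms by auto
  have "gop n id (\<lambda>m. if m = 0 then Obs else Idm) y x
      = Obs (y 0) (x 0) * (\<Prod>m\<in>{1..<n}. Idm (y m) (x m))"
    unfolding gop_def e by (subst prod.insert) (auto intro!: prod.cong)
  also have "(\<Prod>m\<in>{1..<n}. Idm (y m) (x m)) = (if \<forall>i\<in>{1..<n}. y i = x i then 1 else 0)"
    unfolding Idm_def by (rule prod_indicator) simp
  finally show ?thesis unfolding first_op_def by (rule sym)
qed

lemma op_mult_cong:
  assumes "\<And>z. z \<in> tuples n d \<Longrightarrow> A y z = A' y z" "\<And>z. z \<in> tuples n d \<Longrightarrow> B z x = B' z x"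
  shows "op_mult n d A B y x = op_mult n d A' B' y x"
  unfolding op_mult_def using assms by (auto intro!: sum.cong)

lemma mult_gop:
  assumes t: "\<tau> permutes {..<n}" and t': "\<tau>' permutes {..<n}"
  shows "op_mult n d (gop n \<tau> f) (gop n \<tau>' g) y x = gop n (\<tau> \<circ> \<tau>') (\<lambda>m. mm d (f (\<tau>' m)) (g m)) y x"
proof -
  have bij: "bij_betw \<tau>' {..<n} {..<n}" using t' permutes_imp_bij by blast
  have r1: "(\<Prod>m<n. g m (z (\<tau>' m)) (x m)) = (\<Prod>m<n. g (inv \<tau>' m) (z m) (x (inv \<tau>' m)))" for z
  proof -
    have "(\<Prod>m<n. g m (z (\<tau>' m)) (x m)) = (\<Prod>m<n. (\<lambda>m. g (inv \<tau>' m) (z m) (x (inv \<tau>' m))) (\<tau>' m))"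
      by (rule prod.cong) (simp_all only: permutes_inverses(2)[OF t'])
    also have "\<dots> = (\<Prod>m<n. g (inv \<tau>' m) (z m) (x (inv \<tau>' m)))"
      by (rule prod.reindex_bij_betw[OF bij])
    finally show ?thesis .
  qed
  have "op_mult n d (gop n \<tau> f) (gop n \<tau>' g) y x
     = (\<Sum>z\<in>tuples n d. \<Prod>m<n. f m (y (\<tau> m)) (z m) * g (inv \<tau>' m) (z m) (x (inv \<tau>' m)))"
    unfolding op_mult_def gop_def r1 by (simp add: prod.distrib)
  also have "\<dots> = (\<Prod>m<n. \<Sum>t<d. f m (y (\<tau> m)) t * g (inv \<tau>' m) t (x (inv \<tau>' m)))"
    by (rule sum_tuples_prod)
  also have "\<dots> = (\<Prod>m<n. \<Sum>t<d. f (\<tau>' m) (y (\<tau> (\<tau>' m))) t * g m t (x m))"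
  proof -
    have "(\<Prod>m<n. \<Sum>t<d. f (\<tau>' m) (y (\<tau> (\<tau>' m))) t * g m t (x m))
       = (\<Prod>m<n. (\<lambda>m. \<Sum>t<d. f m (y (\<tau> m)) t * g (inv \<tau>' m) t (x (inv \<tau>' m))) (\<tau>' m))"
      by (rule prod.cong) (simp_all only: permutes_inverses(2)[OF t'])
    also have "\<dots> = (\<Prod>m<n. \<Sum>t<d. f m (y (\<tau> m)) t * g (inv \<tau>' m) t (x (inv \<tau>' m)))"
      by (rule prod.reindex_bij_betw[OF bij])
    finally show ?thesis by (rule sym)
  qed
  also have "\<dots> = gop n (\<tau> \<circ> \<tau>') (\<lambda>m. mm d (f (\<tau>' m)) (g m)) y x"
    by (simp only: gop_def mm_def o_apply)
  finally show ?thesis .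
qed



definition pshift :: "nat \<Rightarrow> nat \<Rightarrow> nat" where
  "pshift k x = (if x < k then (if x = 0 then k - 1 else x - 1) else x)"

definition rfl :: "nat \<Rightarrow> nat \<Rightarrow> nat" where
  "rfl k x = (if 0 < x \<and> x < k then k - x else x)"

lemma cyc_pshift [simp]: "cyc_shift k (pshift k x) = x"
  by (auto simp: cyc_shift_def pshift_def)

lemma pshift_cyc [simp]: "pshift k (cyc_shift k x) = x"
  by (auto simp: cyc_shift_def pshift_def)

lemma rfl_rfl [simp]: "rfl k (rfl k x) = x"
  by (auto simp: rfl_def)

lemma rfl_0 [simp]: "rfl k 0 = 0"
  by (auto simp: rfl_def)

lemma rfl_cyc [simp]: "rfl k (cyc_shift k x) = pshift k (rfl k x)"
  by (auto simp: cyc_shift_def pshift_def rfl_def)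

lemma rfl_pshift [simp]: "rfl k (pshift k x) = cyc_shift k (rfl k x)"
  by (metis cyc_pshift pshift_cyc rfl_cyc rfl_rfl)

lemma permutesI_inv:
  assumes "\<And>x. f (g x) = x" "\<And>x. g (f x) = x" "\<And>x. x \<notin> S \<Longrightarrow> f x = x"
  shows "f permutes S"
  unfolding permutes_def using assms by metis

lemma cyc_permutes: "k \<le> n \<Longrightarrow> cyc_shift k permutes {..<n}"
  by (rule permutesI_inv[where g="pshift k"]) (simp, simp, simp add: cyc_shift_def)

lemma pshift_permutes: "k \<le> n \<Longrightarrow> pshift k permutes {..<n}"
  by (rule permutesI_inv[where g="cyc_shift k"]) (simp, simp, simp add: pshift_def)

lemma rfl_permutes: "k \<le> n \<Longrightarrow> rfl k permutes {..<n}"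
  by (rule permutesI_inv[where g="rfl k"]) (auto simp: rfl_def)

lemma inv_cyc: "inv (cyc_shift k) = pshift k"
  by (rule inv_unique_comp) (auto simp: fun_eq_iff)

lemma inv_conj:
  assumes "\<pi> permutes S" and "\<And>x. f (g x) = x" "\<And>x. g (f x) = x"
  shows "inv (\<pi> \<circ> f \<circ> inv \<pi>) = \<pi> \<circ> g \<circ> inv \<pi>"
  by (rule inv_unique_comp)
     (auto simp: fun_eq_iff assms permutes_inverses[OF assms(1)])



definition E :: "(nat \<Rightarrow> nat \<Rightarrow> complex) \<Rightarrow> nat \<Rightarrow> nat \<Rightarrow> nat \<Rightarrow> nat \<Rightarrow> complex" where
  "E Obs a = (\<lambda>m. if m = a then Obs else Idm)"

lemma mm_Idm_left: "a < d \<Longrightarrow> mm d Idm A a b = A a b"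
proof -
  assume a: "a < d"
  have "mm d Idm A a b = (\<Sum>t<d. if t = a then A a b else 0)"
    unfolding mm_def Idm_def by (rule sum.cong) auto
  thus ?thesis using a by simp
qed

lemma mm_Idm_right: "b < d \<Longrightarrow> mm d A Idm a b = A a b"
proof -
  assume b: "b < d"
  have "mm d A Idm a b = (\<Sum>t<d. if t = b then A a b else 0)"
    unfolding mm_def Idm_def by (rule sum.cong) auto
  thus ?thesis using b by simp
qed

lemma sym_op_gop:
  assumes kn: "k \<le> n" and n1: "n \<ge> 1" and y: "y \<in> tuples n d" and x: "x \<in> tuples n d"
  shows "sym_op n d Obs k y x = (1 / of_nat (fact n)) *
    (\<Sum>\<pi>\<in>{\<pi>. \<pi> permutes {..<n}}. gop n (\<pi> \<circ> cyc_shift k \<circ> inv \<pi>) (E Obs (\<pi> 0)) y x)"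
  unfolding sym_op_def
proof (rule arg_cong[where f="\<lambda>s. (1 / of_nat (fact n)) * s"], rule sum.cong[OF refl])
  fix \<pi> assume "\<pi> \<in> {\<pi>. \<pi> permutes {..<n}}"
  hence p: "\<pi> permutes {..<n}" by simp
  have pi: "inv \<pi> permutes {..<n}" using permutes_inv[OF p] .
  have s: "cyc_shift k permutes {..<n}" using cyc_permutes[OF kn] .
  have ps: "\<pi> \<circ> cyc_shift k permutes {..<n}" using permutes_compose[OF s p] .
  have pid: "id permutes {..<n}" by simp
  have psi: "\<pi> \<circ> cyc_shift k \<circ> id permutes {..<n}" using ps by simp
  define F1 where "F1 = (\<lambda>m::nat. mm d (Idm) (Idm))"
  have st1: "op_mult n d (perm_op \<pi>) (perm_op (cyc_shift k)) y' z = gop n (\<pi> \<circ> cyc_shift k) F1 y' z"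
    if "y' \<in> tuples n d" "z \<in> tuples n d" for y' z
  proof -
    have "op_mult n d (perm_op \<pi>) (perm_op (cyc_shift k)) y' z
        = op_mult n d (gop n \<pi> (\<lambda>_. Idm)) (gop n (cyc_shift k) (\<lambda>_. Idm)) y' z"
      by (rule op_mult_cong) (auto simp: perm_op_gop[OF p, where d=d] perm_op_gop[OF s, where d=d] that)
    also have "\<dots> = gop n (\<pi> \<circ> cyc_shift k) F1 y' z"
      unfolding F1_def by (rule mult_gop[OF p s])
    finally show ?thesis .
  qed
  define F2 where "F2 = (\<lambda>m::nat. mm d (F1 m) (E Obs 0 m))"
  have st2: "op_mult n d (op_mult n d (perm_op \<pi>) (perm_op (cyc_shift k))) (first_op n Obs) y' z
      = gop n (\<pi> \<circ> cyc_shift k \<circ> id) F2 y' z"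
    if "y' \<in> tuples n d" "z \<in> tuples n d" for y' z
  proof -
    have "op_mult n d (op_mult n d (perm_op \<pi>) (perm_op (cyc_shift k))) (first_op n Obs) y' z
       = op_mult n d (gop n (\<pi> \<circ> cyc_shift k) F1) (gop n id (E Obs 0)) y' z"
      by (rule op_mult_cong) (auto simp: st1 that first_op_gop[OF n1] E_def)
    also have "\<dots> = gop n (\<pi> \<circ> cyc_shift k \<circ> id) F2 y' z"
      unfolding F2_def using mult_gop[OF ps pid, where f=F1 and g="E Obs 0" and d=d] by simp
    finally show ?thesis .
  qed
  define F3 where "F3 = (\<lambda>m::nat. mm d (F2 (inv \<pi> m)) Idm)"
  have "op_mult n d (op_mult n d (op_mult n d (perm_op \<pi>) (perm_op (cyc_shift k))) (first_op n Obs))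
          (op_adj (perm_op \<pi>)) y x
     = op_mult n d (gop n (\<pi> \<circ> cyc_shift k \<circ> id) F2) (gop n (inv \<pi>) (\<lambda>_. Idm)) y x"
    by (rule op_mult_cong) (auto simp: st2 y x adj_perm_op[OF p] perm_op_gop[OF pi, where d=d])
  also have "\<dots> = gop n (\<pi> \<circ> cyc_shift k \<circ> id \<circ> inv \<pi>) F3 y x"
    unfolding F3_def by (rule mult_gop[OF psi pi])
  also have "\<dots> = gop n (\<pi> \<circ> cyc_shift k \<circ> inv \<pi>) F3 y x" by simp
  also have "\<dots> = gop n (\<pi> \<circ> cyc_shift k \<circ> inv \<pi>) (E Obs (\<pi> 0)) y x"
  proof (rule gop_cong)
    show "(\<pi> \<circ> cyc_shift k \<circ> inv \<pi>) permutes {..<n}"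
      using permutes_compose[OF pi ps] by (simp add: o_assoc)
    fix m a b assume m: "m < n" and a: "a < d" and b: "b < d"
    have "F3 m a b = F2 (inv \<pi> m) a b" unfolding F3_def using mm_Idm_right[OF b] .
    also have "\<dots> = (\<Sum>t<d. F1 (inv \<pi> m) a t * E Obs 0 (inv \<pi> m) t b)" unfolding F2_def mm_def ..
    also have "\<dots> = (\<Sum>t<d. Idm a t * E Obs 0 (inv \<pi> m) t b)"
      unfolding F1_def by (rule sum.cong) (auto simp: mm_Idm_left a)
    also have "\<dots> = E Obs 0 (inv \<pi> m) a b" using mm_Idm_left[OF a] unfolding mm_def .
    also have "\<dots> = E Obs (\<pi> 0) m a b"
    proof -
      have "(inv \<pi> m = 0) = (m = \<pi> 0)"
      proof
        assume "inv \<pi> m = 0" hence "\<pi> (inv \<pi> m) = \<pi> 0" by simp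
        thus "m = \<pi> 0" using permutes_inverses(1)[OF p] by simp
      next
        assume "m = \<pi> 0" thus "inv \<pi> m = 0" using permutes_inverses(2)[OF p] by simp
      qed
      thus ?thesis unfolding E_def by simp
    qed
    finally show "F3 m a b = E Obs (\<pi> 0) m a b" .
  qed (use y x in auto)
  finally show "op_mult n d (op_mult n d (op_mult n d (perm_op \<pi>) (perm_op (cyc_shift k))) (first_op n Obs))
          (op_adj (perm_op \<pi>)) y x = gop n (\<pi> \<circ> cyc_shift k \<circ> inv \<pi>) (E Obs (\<pi> 0)) y x" .
qed



lemma sum_perm_left:
  assumes p: "\<pi> permutes S"
  shows "(\<Sum>\<sigma>\<in>{\<sigma>. \<sigma> permutes S}. H (\<pi> \<circ> \<sigma>)) = (\<Sum>\<sigma>\<in>{\<sigma>. \<sigma> permutes S}. H \<sigma>)"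
proof (rule sum.reindex_bij_witness[where j="\<lambda>\<sigma>. \<pi> \<circ> \<sigma>" and i="\<lambda>\<sigma>. inv \<pi> \<circ> \<sigma>"])
  fix a assume "a \<in> {\<sigma>. \<sigma> permutes S}"
  show "inv \<pi> \<circ> (\<pi> \<circ> a) = a" by (simp add: o_assoc permutes_inv_o(2)[OF p])
  show "\<pi> \<circ> a \<in> {\<sigma>. \<sigma> permutes S}" using permutes_compose[OF _ p] \<open>a \<in> _\<close> by auto
  show "H (\<pi> \<circ> a) = H (\<pi> \<circ> a)" ..
next
  fix b assume "b \<in> {\<sigma>. \<sigma> permutes S}"
  show "\<pi> \<circ> (inv \<pi> \<circ> b) = b" by (simp add: o_assoc permutes_inv_o(1)[OF p])
  show "inv \<pi> \<circ> b \<in> {\<sigma>. \<sigma> permutes S}" using permutes_compose[OF _ permutes_inv[OF p]] \<open>b \<in> _\<close> by auto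
qed

lemma sum_perm_right:
  assumes p: "\<pi> permutes S"
  shows "(\<Sum>\<sigma>\<in>{\<sigma>. \<sigma> permutes S}. H (\<sigma> \<circ> \<pi>)) = (\<Sum>\<sigma>\<in>{\<sigma>. \<sigma> permutes S}. H \<sigma>)"
proof (rule sum.reindex_bij_witness[where j="\<lambda>\<sigma>. \<sigma> \<circ> \<pi>" and i="\<lambda>\<sigma>. \<sigma> \<circ> inv \<pi>"])
  fix a assume "a \<in> {\<sigma>. \<sigma> permutes S}"
  show "a \<circ> \<pi> \<circ> inv \<pi> = a" by (simp add: o_assoc[symmetric] permutes_inv_o(1)[OF p])
  show "a \<circ> \<pi> \<in> {\<sigma>. \<sigma> permutes S}" using permutes_compose[OF p] \<open>a \<in> _\<close> by auto
  show "H (a \<circ> \<pi>) = H (a \<circ> \<pi>)" ..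
next
  fix b assume "b \<in> {\<sigma>. \<sigma> permutes S}"
  show "b \<circ> inv \<pi> \<circ> \<pi> = b" by (simp add: o_assoc[symmetric] permutes_inv_o(2)[OF p])
  show "b \<circ> inv \<pi> \<in> {\<sigma>. \<sigma> permutes S}" using permutes_compose[OF permutes_inv[OF p]] \<open>b \<in> _\<close> by auto
qed

lemma sum_perm_inv:
  "(\<Sum>\<sigma>\<in>{\<sigma>. \<sigma> permutes S}. H (inv \<sigma>)) = (\<Sum>\<sigma>\<in>{\<sigma>. \<sigma> permutes S}. H \<sigma>)"
proof (rule sum.reindex_bij_witness[where j="\<lambda>\<sigma>. inv \<sigma>" and i="\<lambda>\<sigma>. inv \<sigma>"])
  fix a assume a: "a \<in> {\<sigma>. \<sigma> permutes S}"
  show "inv (inv a) = a" using a permutes_inv_inv by auto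
  show "inv a \<in> {\<sigma>. \<sigma> permutes S}" using a permutes_inv by auto
  show "H (inv a) = H (inv a)" ..
next
  fix b assume b: "b \<in> {\<sigma>. \<sigma> permutes S}"
  show "inv (inv b) = b" using b permutes_inv_inv by auto
  show "inv b \<in> {\<sigma>. \<sigma> permutes S}" using b permutes_inv by auto
qed

lemma inv_comp_perm:
  assumes "\<pi> permutes S" "\<sigma> permutes S"
  shows "inv (\<pi> \<circ> \<sigma>) = inv \<sigma> \<circ> inv \<pi>"
  using o_inv_distrib[OF permutes_bij[OF assms(1)] permutes_bij[OF assms(2)]] .

definition M :: "nat \<Rightarrow> (nat \<Rightarrow> nat \<Rightarrow> complex) \<Rightarrow> nat \<Rightarrow> nat \<Rightarrow> nat \<Rightarrow> nat \<Rightarrow> nat \<Rightarrow> complex" where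
  "M d Obs a b = (\<lambda>m. mm d (E Obs a m) (E Obs b m))"

definition Sy :: "nat \<Rightarrow> nat \<Rightarrow> (nat \<Rightarrow> nat \<Rightarrow> complex) \<Rightarrow> (nat \<Rightarrow> nat) \<Rightarrow> nat \<Rightarrow> nat \<Rightarrow> tensor_op" where
  "Sy n d Obs \<rho> a b = (\<lambda>y x. \<Sum>\<pi>\<in>{\<pi>. \<pi> permutes {..<n}}. gop n (\<pi> \<circ> \<rho> \<circ> inv \<pi>) (M d Obs (\<pi> a) (\<pi> b)) y x)"

lemma E_comp:
  assumes "c permutes S"
  shows "E Obs a (c m) = E Obs (inv c a) m"
proof -
  have "(c m = a) = (m = inv c a)"
    using permutes_inverses[OF assms] by (metis)
  thus ?thesis unfolding E_def by simp
qed

lemma prod_sym: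
  assumes i: "i \<le> n" and j: "j \<le> n" and n1: "n \<ge> 1" and y: "y \<in> tuples n d" and x: "x \<in> tuples n d"
  shows "op_mult n d (sym_op n d Obs i) (sym_op n d Obs j) y x
    = (1 / of_nat (fact n)) * (1 / of_nat (fact n)) *
      (\<Sum>\<sigma>\<in>{\<sigma>. \<sigma> permutes {..<n}}.
         Sy n d Obs (cyc_shift i \<circ> \<sigma> \<circ> cyc_shift j \<circ> inv \<sigma>) (\<sigma> (pshift j (inv \<sigma> 0))) (\<sigma> 0) y x)"
proof -
  let ?P = "{\<sigma>. \<sigma> permutes {..<n}}"
  let ?c = "1 / of_nat (fact n) :: complex"
  define G where "G = (\<lambda>k (\<pi>::nat\<Rightarrow>nat). gop n (\<pi> \<circ> cyc_shift k \<circ> inv \<pi>) (E Obs (\<pi> 0)))"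
  have si: "cyc_shift i permutes {..<n}" using cyc_permutes[OF i] .
  have sj: "cyc_shift j permutes {..<n}" using cyc_permutes[OF j] .
  have Gp: "\<pi> \<circ> cyc_shift k \<circ> inv \<pi> permutes {..<n}" if "\<pi> permutes {..<n}" "cyc_shift k permutes {..<n}" for \<pi> k
    using permutes_compose[OF permutes_inv[OF that(1)] permutes_compose[OF that(2) that(1)]]
    by (simp add: o_assoc)
  have "op_mult n d (sym_op n d Obs i) (sym_op n d Obs j) y x
      = (\<Sum>z\<in>tuples n d. (?c * (\<Sum>\<pi>\<in>?P. G i \<pi> y z)) * (?c * (\<Sum>\<pi>'\<in>?P. G j \<pi>' z x)))"
    unfolding op_mult_def G_def
    by (rule sum.cong[OF refl]) (simp add: sym_op_gop[OF i n1 y] sym_op_gop[OF j n1 _ x])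
  also have "\<dots> = ?c * ?c * (\<Sum>\<pi>\<in>?P. \<Sum>\<pi>'\<in>?P. \<Sum>z\<in>tuples n d. G i \<pi> y z * G j \<pi>' z x)"
  proof -
    have "(\<Sum>z\<in>tuples n d. (?c * (\<Sum>\<pi>\<in>?P. G i \<pi> y z)) * (?c * (\<Sum>\<pi>'\<in>?P. G j \<pi>' z x)))
        = ?c * ?c * (\<Sum>z\<in>tuples n d. \<Sum>\<pi>\<in>?P. \<Sum>\<pi>'\<in>?P. G i \<pi> y z * G j \<pi>' z x)"
    proof -
      have "(\<Sum>z\<in>tuples n d. (?c * (\<Sum>\<pi>\<in>?P. G i \<pi> y z)) * (?c * (\<Sum>\<pi>'\<in>?P. G j \<pi>' z x)))
          = (\<Sum>z\<in>tuples n d. ?c * ?c * ((\<Sum>\<pi>\<in>?P. G i \<pi> y z) * (\<Sum>\<pi>'\<in>?P. G j \<pi>' z x)))"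
        by (rule sum.cong[OF refl]) (simp only: mult_ac)
      also have "\<dots> = ?c * ?c * (\<Sum>z\<in>tuples n d. (\<Sum>\<pi>\<in>?P. G i \<pi> y z) * (\<Sum>\<pi>'\<in>?P. G j \<pi>' z x))"
        by (rule sum_distrib_left[symmetric])
      also have "\<dots> = ?c * ?c * (\<Sum>z\<in>tuples n d. \<Sum>\<pi>\<in>?P. \<Sum>\<pi>'\<in>?P. G i \<pi> y z * G j \<pi>' z x)"
        by (simp only: sum_product)
      finally show ?thesis .
    qed
    also have "(\<Sum>z\<in>tuples n d. \<Sum>\<pi>\<in>?P. \<Sum>\<pi>'\<in>?P. G i \<pi> y z * G j \<pi>' z x)
        = (\<Sum>\<pi>\<in>?P. \<Sum>z\<in>tuples n d. \<Sum>\<pi>'\<in>?P. G i \<pi> y z * G j \<pi>' z x)"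
      by (rule sum.swap)
    also have "\<dots> = (\<Sum>\<pi>\<in>?P. \<Sum>\<pi>'\<in>?P. \<Sum>z\<in>tuples n d. G i \<pi> y z * G j \<pi>' z x)"
      by (rule sum.cong[OF refl], rule sum.swap)
    finally show ?thesis .
  qed
  also have "\<dots> = ?c * ?c * (\<Sum>\<pi>\<in>?P. \<Sum>\<pi>'\<in>?P. op_mult n d (G i \<pi>) (G j \<pi>') y x)"
    unfolding op_mult_def ..
  also have "\<dots> = ?c * ?c * (\<Sum>\<pi>\<in>?P. \<Sum>\<sigma>\<in>?P. op_mult n d (G i \<pi>) (G j (\<pi> \<circ> \<sigma>)) y x)"
  proof (rule arg_cong[where f="\<lambda>s. ?c * ?c * s"], rule sum.cong[OF refl])
    fix \<pi> assume "\<pi> \<in> ?P"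
    thus "(\<Sum>\<pi>'\<in>?P. op_mult n d (G i \<pi>) (G j \<pi>') y x) = (\<Sum>\<sigma>\<in>?P. op_mult n d (G i \<pi>) (G j (\<pi> \<circ> \<sigma>)) y x)"
      using sum_perm_left[of \<pi> "{..<n}" "\<lambda>\<pi>'. op_mult n d (G i \<pi>) (G j \<pi>') y x"] by simp
  qed
  also have "\<dots> = ?c * ?c * (\<Sum>\<pi>\<in>?P. \<Sum>\<sigma>\<in>?P.
       gop n (\<pi> \<circ> (cyc_shift i \<circ> \<sigma> \<circ> cyc_shift j \<circ> inv \<sigma>) \<circ> inv \<pi>)
         (M d Obs (\<pi> (\<sigma> (pshift j (inv \<sigma> 0)))) (\<pi> (\<sigma> 0))) y x)"
  proof (intro arg_cong[where f="\<lambda>s. ?c * ?c * s"] sum.cong[OF refl])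
    fix \<pi> \<sigma> assume p: "\<pi> \<in> ?P" and s: "\<sigma> \<in> ?P"
    hence p: "\<pi> permutes {..<n}" and s: "\<sigma> permutes {..<n}" by auto
    have ps: "\<pi> \<circ> \<sigma> permutes {..<n}" using permutes_compose[OF s p] .
    have ip: "inv (\<pi> \<circ> \<sigma>) = inv \<sigma> \<circ> inv \<pi>" using inv_comp_perm[OF p s] .
    have c2p: "\<pi> \<circ> \<sigma> \<circ> cyc_shift j \<circ> inv (\<pi> \<circ> \<sigma>) permutes {..<n}" using Gp[OF ps sj] by simp
    have inv2: "inv (\<pi> \<circ> \<sigma> \<circ> cyc_shift j \<circ> inv (\<pi> \<circ> \<sigma>)) = \<pi> \<circ> \<sigma> \<circ> pshift j \<circ> inv (\<pi> \<circ> \<sigma>)"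
      using inv_conj[OF ps, of "cyc_shift j" "pshift j"] by simp
    have "op_mult n d (G i \<pi>) (G j (\<pi> \<circ> \<sigma>)) y x
       = gop n ((\<pi> \<circ> cyc_shift i \<circ> inv \<pi>) \<circ> (\<pi> \<circ> \<sigma> \<circ> cyc_shift j \<circ> inv (\<pi> \<circ> \<sigma>)))
           (\<lambda>m. mm d (E Obs (\<pi> 0) ((\<pi> \<circ> \<sigma> \<circ> cyc_shift j \<circ> inv (\<pi> \<circ> \<sigma>)) m)) (E Obs ((\<pi> \<circ> \<sigma>) 0) m)) y x"
      unfolding G_def by (rule mult_gop[OF Gp[OF p si] Gp[OF ps sj]])
    also have "(\<pi> \<circ> cyc_shift i \<circ> inv \<pi>) \<circ> (\<pi> \<circ> \<sigma> \<circ> cyc_shift j \<circ> inv (\<pi> \<circ> \<sigma>))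
        = \<pi> \<circ> (cyc_shift i \<circ> \<sigma> \<circ> cyc_shift j \<circ> inv \<sigma>) \<circ> inv \<pi>"
      by (simp add: ip fun_eq_iff permutes_inverses[OF p])
    also have "(\<lambda>m. mm d (E Obs (\<pi> 0) ((\<pi> \<circ> \<sigma> \<circ> cyc_shift j \<circ> inv (\<pi> \<circ> \<sigma>)) m)) (E Obs ((\<pi> \<circ> \<sigma>) 0) m))
        = M d Obs (\<pi> (\<sigma> (pshift j (inv \<sigma> 0)))) (\<pi> (\<sigma> 0))"
      unfolding M_def E_comp[OF c2p] inv2 by (simp add: ip permutes_inverses[OF p])
    finally show "op_mult n d (G i \<pi>) (G j (\<pi> \<circ> \<sigma>)) y x = gop n (\<pi> \<circ> (cyc_shift i \<circ> \<sigma> \<circ> cyc_shift j \<circ> inv \<sigma>) \<circ> inv \<pi>)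
         (M d Obs (\<pi> (\<sigma> (pshift j (inv \<sigma> 0)))) (\<pi> (\<sigma> 0))) y x" .
  qed
  also have "\<dots> = ?c * ?c * (\<Sum>\<sigma>\<in>?P.
         Sy n d Obs (cyc_shift i \<circ> \<sigma> \<circ> cyc_shift j \<circ> inv \<sigma>) (\<sigma> (pshift j (inv \<sigma> 0))) (\<sigma> 0) y x)"
    unfolding Sy_def by (subst sum.swap) simp
  finally show ?thesis .
qed



lemma reversal_exists:
  assumes p: "\<rho> permutes S" and fin: "finite S"
  shows "\<exists>g. g permutes S \<and> g \<circ> \<rho> \<circ> inv g = inv \<rho> \<and> ((g a = a \<and> g b = b) \<or> (g a = b \<and> g b = a))"
proof -
  have "permutation \<rho>" using p fin permutation_permutes by blast
  then obtain N where N: "\<rho> ^^ N = id" "N > 0" using permutation_is_nilpotent by blast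
  have F1: "\<rho> ^^ m = \<rho> ^^ (m mod N)" for m
  proof -
    have "\<rho> ^^ (N * (m div N)) = id" by (simp add: funpow_mult[symmetric] N(1))
    hence "\<rho> ^^ m = \<rho> ^^ (m mod N) \<circ> \<rho> ^^ (N * (m div N))"
      by (metis funpow_add comp_id div_mult_mod_eq mult.commute add.commute)
    thus ?thesis using \<open>\<rho> ^^ (N * (m div N)) = id\<close> by simp
  qed
  define pw where "pw z = \<rho> ^^ nat (z mod int N)" for z :: int
  have pw_nat: "pw (int m) = \<rho> ^^ m" for m
    unfolding pw_def using F1[of m] by (simp add: nat_mod_distrib)
  have pw_add: "pw (z1 + z2) = pw z1 \<circ> pw z2" for z1 z2
  proof -
    have "nat ((z1 + z2) mod int N) = (nat (z1 mod int N) + nat (z2 mod int N)) mod N"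
    proof -
      have "(z1 + z2) mod int N = (z1 mod int N + z2 mod int N) mod int N" by (simp add: mod_add_eq)
      also have "nat \<dots> = nat (z1 mod int N + z2 mod int N) mod N"
        using N(2) by (simp add: nat_mod_distrib)
      also have "nat (z1 mod int N + z2 mod int N) = nat (z1 mod int N) + nat (z2 mod int N)"
        using N(2) by (simp add: nat_add_distrib)
      finally show ?thesis .
    qed
    thus ?thesis unfolding pw_def by (simp add: F1[symmetric] funpow_add)
  qed
  have pw0: "pw 0 = id" unfolding pw_def by simp
  have pw1: "pw 1 = \<rho>" using pw_nat[of 1] by simp
  have pwm1: "pw (-1) = inv \<rho>"
  proof -
    have "\<rho> \<circ> pw (-1) = id" using pw_add[of 1 "-1"] pw1 pw0 by simp
    moreover have "pw (-1) \<circ> \<rho> = id" using pw_add[of "-1" 1] pw1 pw0 by simp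
    ultimately show ?thesis by (metis inv_unique_comp)
  qed
  have pwa: "pw z1 (pw z2 x) = pw (z1 + z2) x" for z1 z2 x using pw_add by simp
  have fixp: "pw z x = x" if "\<rho> x = x" for z x
  proof -
    have "(\<rho> ^^ m) x = x" for m by (induction m) (simp_all add: that)
    thus ?thesis unfolding pw_def by simp
  qed
  define rel where "rel x q \<longleftrightarrow> (\<exists>z. pw z q = x)" for x q
  have rel_refl: "rel x x" for x unfolding rel_def using pw0 by (metis id_apply)
  have rel_sym: "rel x q \<Longrightarrow> rel q x" for x q
    unfolding rel_def using pwa pw0 by (metis add.left_inverse id_apply)
  have rel_trans: "rel x q \<Longrightarrow> rel q r \<Longrightarrow> rel x r" for x q r
    unfolding rel_def using pwa by metis
  define bs where "bs x = (if rel x a then a else if rel x b then b else (SOME q. rel x q))" for x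
  define tg where "tg x = (if rel x a \<and> rel b a then b else bs x)" for x
  define g where "g x = pw (- (SOME z. pw z (bs x) = x)) (tg x)" for x
  have K1: "rel x (bs x)" for x
  proof -
    have "rel x (SOME q. rel x q)" by (rule someI[of "rel x" x]) (rule rel_refl)
    thus ?thesis unfolding bs_def by (auto)
  qed
  have K2: "bs x = bs y \<and> tg x = tg y" if "rel x y" for x y
  proof -
    have e: "rel x q = rel y q" for q using that rel_sym rel_trans by blast
    have e2: "rel x = rel y" using e by (simp add: fun_eq_iff)
    show ?thesis unfolding bs_def tg_def e2 by simp
  qed
  have K3: "rel (tg x) (bs x)" for x
    unfolding tg_def using rel_refl by (auto simp: bs_def)
  have K4: "g x = pw (-z) (tg x)" if "pw z (bs x) = x" for x z
  proof -
    define z0 where "z0 = (SOME z. pw z (bs x) = x)"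
    have z0: "pw z0 (bs x) = x" unfolding z0_def using someI[of "\<lambda>z. pw z (bs x) = x"] that by blast
    obtain k where k: "pw k (bs x) = tg x" using K3 unfolding rel_def by blast
    have "pw (- z0 - z) (pw z0 (bs x)) = pw (- z0 - z) (pw z (bs x))" using z0 that by simp
    hence e: "pw (-z) (bs x) = pw (-z0) (bs x)" by (simp add: pwa)
    have "g x = pw (-z0) (pw k (bs x))" unfolding g_def z0_def[symmetric] k ..
    also have "\<dots> = pw k (pw (-z0) (bs x))" by (simp add: pwa add.commute)
    also have "\<dots> = pw k (pw (-z) (bs x))" using e by simp
    also have "\<dots> = pw (-z) (tg x)" by (simp add: pwa add.commute k[symmetric])
    finally show ?thesis .
  qed
  have G1: "g (\<rho> x) = inv \<rho> (g x)" for x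
  proof -
    obtain z where z: "pw z (bs x) = x" using K1 unfolding rel_def by blast
    have r: "rel (\<rho> x) x" unfolding rel_def using pw1 by auto
    have "pw (1 + z) (bs (\<rho> x)) = \<rho> x" using K2[OF r] z pw1 by (simp add: pwa[symmetric])
    hence "g (\<rho> x) = pw (-(1+z)) (tg (\<rho> x))" by (rule K4)
    also have "\<dots> = pw (-1) (pw (-z) (tg x))" using K2[OF r] by (simp add: pwa)
    also have "\<dots> = inv \<rho> (g x)" using K4[OF z] pwm1 by simp
    finally show ?thesis .
  qed
  have G2: "g (g x) = x" for x
  proof -
    obtain z where z: "pw z (bs x) = x" using K1 unfolding rel_def by blast
    obtain k where k: "pw k (bs x) = tg x" using K3 unfolding rel_def by blast
    have gx: "g x = pw (k - z) (bs x)"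
    proof -
      have "g x = pw (-z) (pw k (bs x))" using K4[OF z] k by simp
      also have "\<dots> = pw (k - z) (bs x)" by (simp add: pwa)
      finally show ?thesis .
    qed
    have r1: "rel (g x) (bs x)" unfolding rel_def by (rule exI[of _ "k - z"]) (simp add: gx)
    have r: "rel (g x) x" using rel_trans[OF r1 rel_sym[OF K1[of x]]] .
    have "pw (k - z) (bs (g x)) = g x" using gx K2[OF r] by simp
    hence "g (g x) = pw (-(k-z)) (tg (g x))" by (rule K4)
    also have "\<dots> = pw (z - k) (pw k (bs x))" using K2[OF r] k by simp
    also have "\<dots> = x" using z by (simp add: pwa)
    finally show ?thesis .
  qed
  have G4: "g x = x" if "x \<notin> S" for x
  proof -
    have fx: "\<rho> x = x" using p that permutes_not_in by fast
    obtain z where z: "pw z (bs x) = x" using K1 unfolding rel_def by blast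
    have "rel (tg x) x" using K3[of x] K1[of x] rel_sym rel_trans by blast
    then obtain w where "pw w x = tg x" unfolding rel_def by blast
    hence "tg x = x" using fixp[OF fx] by simp
    thus ?thesis using K4[OF z] fixp[OF fx] by simp
  qed
  have perm: "g permutes S" by (rule permutesI_inv[where g=g]) (simp_all add: G2 G4)
  have ig: "inv g = g" by (rule inv_unique_comp) (simp_all add: fun_eq_iff G2)
  have conj: "g \<circ> \<rho> \<circ> inv g = inv \<rho>"
    unfolding ig by (simp add: fun_eq_iff G1 G2)
  have ga: "g a = tg a"
  proof -
    have "pw 0 (bs a) = a" using pw0 rel_refl by (simp add: bs_def)
    thus ?thesis using K4 pw0 by (metis id_apply minus_zero)
  qed
  have marks: "(g a = a \<and> g b = b) \<or> (g a = b \<and> g b = a)"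
  proof (cases "rel b a")
    case True
    then obtain k where k: "pw k a = b" unfolding rel_def by blast
    have "bs b = a" using True by (simp add: bs_def)
    hence "pw k (bs b) = b" using k by simp
    hence "g b = pw (-k) (tg b)" by (rule K4)
    also have "tg b = b" using True by (simp add: tg_def)
    finally have "g b = a" using k pw0 by (metis add.left_inverse id_apply pwa)
    moreover have "g a = b" using ga True rel_refl by (simp add: tg_def)
    ultimately show ?thesis by simp
  next
    case False
    have "g a = a" using ga False by (simp add: tg_def bs_def rel_refl)
    moreover have "bs b = b" using False rel_refl by (simp add: bs_def)
    hence "pw 0 (bs b) = b" using pw0 by simp
    hence "g b = pw 0 (tg b)" using K4 by (metis minus_zero)
    hence "g b = b" using False \<open>bs b = b\<close> pw0 by (simp add: tg_def)
    ultimately show ?thesis by simp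
  qed
  show ?thesis using perm conj marks by blast
qed



lemma inv_eqI: "(\<And>x. f (g x) = x) \<Longrightarrow> (\<And>x. g (f x) = x) \<Longrightarrow> inv f = g"
  by (rule inv_unique_comp) (auto simp: fun_eq_iff)

lemma Sy_conj:
  assumes g: "g permutes {..<n}"
  shows "Sy n d Obs (g \<circ> \<rho> \<circ> inv g) (g a) (g b) = Sy n d Obs \<rho> a b"
proof (rule ext, rule ext)
  fix y x
  let ?P = "{\<pi>. \<pi> permutes {..<n}}"
  define H where "H = (\<lambda>\<pi>. gop n (\<pi> \<circ> \<rho> \<circ> inv \<pi>) (M d Obs (\<pi> a) (\<pi> b)) y x)"
  have "Sy n d Obs (g \<circ> \<rho> \<circ> inv g) (g a) (g b) y x = (\<Sum>\<pi>\<in>?P. H (\<pi> \<circ> g))"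
    unfolding Sy_def H_def
  proof (rule sum.cong[OF refl])
    fix \<pi> assume "\<pi> \<in> ?P"
    hence p: "\<pi> permutes {..<n}" by simp
    have "\<pi> \<circ> (g \<circ> \<rho> \<circ> inv g) \<circ> inv \<pi> = (\<pi> \<circ> g) \<circ> \<rho> \<circ> inv (\<pi> \<circ> g)"
      using inv_comp_perm[OF p g] by (simp add: o_assoc)
    thus "gop n (\<pi> \<circ> (g \<circ> \<rho> \<circ> inv g) \<circ> inv \<pi>) (M d Obs (\<pi> (g a)) (\<pi> (g b))) y x =
          gop n ((\<pi> \<circ> g) \<circ> \<rho> \<circ> inv (\<pi> \<circ> g)) (M d Obs ((\<pi> \<circ> g) a) ((\<pi> \<circ> g) b)) y x" by simp
  qed
  also have "\<dots> = (\<Sum>\<pi>\<in>?P. H \<pi>)" by (rule sum_perm_right[OF g])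
  also have "\<dots> = Sy n d Obs \<rho> a b y x" unfolding Sy_def H_def ..
  finally show "Sy n d Obs (g \<circ> \<rho> \<circ> inv g) (g a) (g b) y x = Sy n d Obs \<rho> a b y x" .
qed

lemma M_sym:
  assumes "a' < d" "b' < d"
  shows "M d Obs u v m a' b' = M d Obs v u m a' b'"
  unfolding M_def E_def using assms by (auto simp: mm_Idm_left mm_Idm_right)

lemma Sy_swap:
  assumes r: "\<rho> permutes {..<n}" and y: "y \<in> tuples n d" and x: "x \<in> tuples n d"
  shows "Sy n d Obs \<rho> a b y x = Sy n d Obs \<rho> b a y x"
  unfolding Sy_def
proof (rule sum.cong[OF refl])
  fix \<pi> assume "\<pi> \<in> {\<pi>. \<pi> permutes {..<n}}"
  hence p: "\<pi> permutes {..<n}" by simp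
  have pp: "\<pi> \<circ> \<rho> \<circ> inv \<pi> permutes {..<n}"
    using permutes_compose[OF permutes_inv[OF p] permutes_compose[OF r p]] by (simp add: o_assoc)
  show "gop n (\<pi> \<circ> \<rho> \<circ> inv \<pi>) (M d Obs (\<pi> a) (\<pi> b)) y x = gop n (\<pi> \<circ> \<rho> \<circ> inv \<pi>) (M d Obs (\<pi> b) (\<pi> a)) y x"
    by (rule gop_cong[OF _ pp y x]) (rule M_sym)
qed

lemma Sy_inv:
  assumes r: "\<rho> permutes {..<n}" and y: "y \<in> tuples n d" and x: "x \<in> tuples n d"
  shows "Sy n d Obs (inv \<rho>) a b y x = Sy n d Obs \<rho> a b y x"
proof -
  obtain g where g: "g permutes {..<n}" and c: "g \<circ> \<rho> \<circ> inv g = inv \<rho>"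
    and m: "(g a = a \<and> g b = b) \<or> (g a = b \<and> g b = a)"
    using reversal_exists[OF r, of a b] by auto
  show ?thesis
  proof (cases "g a = a \<and> g b = b")
    case True
    have "Sy n d Obs (inv \<rho>) a b = Sy n d Obs (g \<circ> \<rho> \<circ> inv g) (g a) (g b)" using True c by simp
    thus ?thesis using Sy_conj[OF g] by simp
  next
    case False
    hence gab: "g a = b" "g b = a" using m by auto
    have "Sy n d Obs (inv \<rho>) a b = Sy n d Obs (g \<circ> \<rho> \<circ> inv g) (g b) (g a)" using gab c by simp
    hence "Sy n d Obs (inv \<rho>) a b y x = Sy n d Obs \<rho> b a y x" using Sy_conj[OF g] by simp
    thus ?thesis using Sy_swap[OF r y x] by simp
  qed
qed



lemma term_eq:
  assumes i: "i \<le> n" and j: "j \<le> n" and s: "\<sigma> permutes {..<n}"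
    and y: "y \<in> tuples n d" and x: "x \<in> tuples n d"
  defines "\<tau> \<equiv> cyc_shift j \<circ> rfl j \<circ> inv \<sigma> \<circ> cyc_shift i \<circ> rfl i"
  shows "Sy n d Obs (cyc_shift j \<circ> \<tau> \<circ> cyc_shift i \<circ> inv \<tau>) (\<tau> (pshift i (inv \<tau> 0))) (\<tau> 0) y x
       = Sy n d Obs (cyc_shift i \<circ> \<sigma> \<circ> cyc_shift j \<circ> inv \<sigma>) (\<sigma> (pshift j (inv \<sigma> 0))) (\<sigma> 0) y x"
proof -
  define \<rho> where "\<rho> = cyc_shift i \<circ> \<sigma> \<circ> cyc_shift j \<circ> inv \<sigma>"
  define \<alpha> where "\<alpha> = \<sigma> (pshift j (inv \<sigma> 0))"
  define \<beta> where "\<beta> = \<sigma> 0"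
  define g0 where "g0 = cyc_shift j \<circ> rfl j \<circ> inv \<sigma>"
  have si: "\<sigma> (inv \<sigma> z) = z" "inv \<sigma> (\<sigma> z) = z" for z using permutes_inverses[OF s] by auto
  have P: "cyc_shift k permutes {..<n}" "pshift k permutes {..<n}" "rfl k permutes {..<n}" if "k \<le> n" for k
    using cyc_permutes pshift_permutes rfl_permutes that by auto
  have is': "inv \<sigma> permutes {..<n}" using permutes_inv[OF s] .
  have rp: "\<rho> permutes {..<n}" unfolding \<rho>_def
    by (intro permutes_compose P i j s is')
  have g0p: "g0 permutes {..<n}" unfolding g0_def
    by (intro permutes_compose P i j s is')
  have invtau: "inv \<tau> = (\<lambda>z. rfl i (pshift i (\<sigma> (rfl j (pshift j z)))))"
    by (rule inv_eqI) (simp_all add: \<tau>_def si)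
  have invrho: "inv \<rho> = (\<lambda>z. \<sigma> (pshift j (inv \<sigma> (pshift i z))))"
    by (rule inv_eqI) (simp_all add: \<rho>_def si)
  have invg0: "inv g0 = (\<lambda>z. \<sigma> (rfl j (pshift j z)))"
    by (rule inv_eqI) (simp_all add: g0_def si)
  have irp: "inv \<rho> permutes {..<n}" using permutes_inv[OF rp] .
  have e1: "cyc_shift j \<circ> \<tau> \<circ> cyc_shift i \<circ> inv \<tau> = g0 \<circ> inv \<rho> \<circ> inv g0"
    unfolding invtau invrho invg0 by (simp add: fun_eq_iff \<tau>_def g0_def si)
  have e2: "\<tau> (pshift i (inv \<tau> 0)) = g0 (\<rho> \<beta>)"
    unfolding invtau by (simp add: \<tau>_def g0_def \<rho>_def \<beta>_def si)
  have e3: "\<tau> 0 = g0 (\<rho> \<alpha>)"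
    by (simp add: \<tau>_def g0_def \<rho>_def \<alpha>_def si)
  have rr: "\<rho> \<circ> inv \<rho> \<circ> inv \<rho> = inv \<rho>"
    using permutes_inv_o(1)[OF rp] by (simp add: o_assoc)
  have "Sy n d Obs (cyc_shift j \<circ> \<tau> \<circ> cyc_shift i \<circ> inv \<tau>) (\<tau> (pshift i (inv \<tau> 0))) (\<tau> 0) y x
      = Sy n d Obs (g0 \<circ> inv \<rho> \<circ> inv g0) (g0 (\<rho> \<beta>)) (g0 (\<rho> \<alpha>)) y x"
    unfolding e1 e2 e3 ..
  also have "\<dots> = Sy n d Obs (inv \<rho>) (\<rho> \<beta>) (\<rho> \<alpha>) y x" using Sy_conj[OF g0p] by simp
  also have "\<dots> = Sy n d Obs (inv \<rho>) (\<rho> \<alpha>) (\<rho> \<beta>) y x" by (rule Sy_swap[OF irp y x])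
  also have "\<dots> = Sy n d Obs (\<rho> \<circ> inv \<rho> \<circ> inv \<rho>) (\<rho> \<alpha>) (\<rho> \<beta>) y x" unfolding rr ..
  also have "\<dots> = Sy n d Obs (inv \<rho>) \<alpha> \<beta> y x" using Sy_conj[OF rp] by simp
  also have "\<dots> = Sy n d Obs \<rho> \<alpha> \<beta> y x" by (rule Sy_inv[OF rp y x])
  finally show ?thesis unfolding \<rho>_def \<alpha>_def \<beta>_def .
qed



lemma main_sum:
  assumes i: "i \<le> n" and j: "j \<le> n" and y: "y \<in> tuples n d" and x: "x \<in> tuples n d"
  shows "(\<Sum>\<sigma>\<in>{\<sigma>. \<sigma> permutes {..<n}}.
         Sy n d Obs (cyc_shift j \<circ> \<sigma> \<circ> cyc_shift i \<circ> inv \<sigma>) (\<sigma> (pshift i (inv \<sigma> 0))) (\<sigma> 0) y x)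
    = (\<Sum>\<sigma>\<in>{\<sigma>. \<sigma> permutes {..<n}}.
         Sy n d Obs (cyc_shift i \<circ> \<sigma> \<circ> cyc_shift j \<circ> inv \<sigma>) (\<sigma> (pshift j (inv \<sigma> 0))) (\<sigma> 0) y x)"
proof -
  let ?P = "{\<sigma>. \<sigma> permutes {..<n}}"
  define K where "K = (\<lambda>\<sigma>. Sy n d Obs (cyc_shift j \<circ> \<sigma> \<circ> cyc_shift i \<circ> inv \<sigma>) (\<sigma> (pshift i (inv \<sigma> 0))) (\<sigma> 0) y x)"
  define A where "A = cyc_shift j \<circ> rfl j"
  define B where "B = cyc_shift i \<circ> rfl i"
  have Ap: "A permutes {..<n}" unfolding A_def
    using permutes_compose[OF rfl_permutes[OF j] cyc_permutes[OF j]] .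
  have Bp: "B permutes {..<n}" unfolding B_def
    using permutes_compose[OF rfl_permutes[OF i] cyc_permutes[OF i]] .
  have "(\<Sum>\<sigma>\<in>?P. K \<sigma>) = (\<Sum>\<sigma>\<in>?P. K (A \<circ> \<sigma>))" by (rule sum_perm_left[OF Ap, symmetric])
  also have "\<dots> = (\<Sum>\<sigma>\<in>?P. K (A \<circ> (\<sigma> \<circ> B)))"
    using sum_perm_right[OF Bp, of "\<lambda>\<sigma>. K (A \<circ> \<sigma>)"] by simp
  also have "\<dots> = (\<Sum>\<sigma>\<in>?P. K (A \<circ> (inv \<sigma> \<circ> B)))"
    using sum_perm_inv[of "\<lambda>\<sigma>. K (A \<circ> (\<sigma> \<circ> B))" "{..<n}"] by simp
  also have "\<dots> = (\<Sum>\<sigma>\<in>?P.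
         Sy n d Obs (cyc_shift i \<circ> \<sigma> \<circ> cyc_shift j \<circ> inv \<sigma>) (\<sigma> (pshift j (inv \<sigma> 0))) (\<sigma> 0) y x)"
  proof (rule sum.cong[OF refl])
    fix \<sigma> assume "\<sigma> \<in> ?P"
    hence s: "\<sigma> permutes {..<n}" by simp
    have "A \<circ> (inv \<sigma> \<circ> B) = cyc_shift j \<circ> rfl j \<circ> inv \<sigma> \<circ> cyc_shift i \<circ> rfl i"
      unfolding A_def B_def by (simp add: o_assoc)
    thus "K (A \<circ> (inv \<sigma> \<circ> B)) = Sy n d Obs (cyc_shift i \<circ> \<sigma> \<circ> cyc_shift j \<circ> inv \<sigma>) (\<sigma> (pshift j (inv \<sigma> 0))) (\<sigma> 0) y x"
      unfolding K_def using term_eq[OF i j s y x, of Obs] by simp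
  qed
  finally show ?thesis unfolding K_def .
qed

theorem proposition2p17:
  fixes n d :: nat and Obs :: "nat \<Rightarrow> nat \<Rightarrow> complex" and i j :: nat
  assumes "hermitian_mat d Obs" and "n \<ge> 1"
    and "1 \<le> i" and "i \<le> j" and "j \<le> n"
  shows "\<forall>y\<in>tuples n d. \<forall>x\<in>tuples n d.
           op_mult n d (sym_op n d Obs i) (sym_op n d Obs j) y x
         = op_mult n d (sym_op n d Obs j) (sym_op n d Obs i) y x"
proof (intro ballI)
  fix y x assume y: "y \<in> tuples n d" and x: "x \<in> tuples n d"
  have i: "i \<le> n" and j: "j \<le> n" using assms by auto
  show "op_mult n d (sym_op n d Obs i) (sym_op n d Obs j) y x
         = op_mult n d (sym_op n d Obs j) (sym_op n d Obs i) y x"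
    unfolding prod_sym[OF i j assms(2) y x] prod_sym[OF j i assms(2) y x]
    using main_sum[OF i j y x, of Obs] by simp
qed

end
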